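(* Let $a,b,\epsilon>0$ and let $n,U,d,m$ be positive integers. Let $X\in\mathbb{R}^{n\times U\times d}$ satisfy $\|X_{i,u,\cdot}\|_2\le b$ for all $i\in\{1,\dots,n\}$ and $u\in\{1,\dots,U\}$, and let $M\in\mathbb{R}^{d\times m}$ be any fixed matrix. Then $$\log\mathcal{N}\Big(\{XA:\ A\in\mathbb{R}^{d\times m},\ \|A-M\|_{F}\le a\},\ \epsilon,\ \|\cdot\|_\infty\Big)\ \le\ \frac{36a^2b^2}{\epsilon^2}\log_2\!\Big[\Big(\frac{8ab}{\epsilon}+7\Big)mnU\Big],$$ where $\|\cdot\|_\infty$ is the maximum absolute entry on $\mathbb{R}^{n\times U\times m}$.
   Context: For $X\in\mathbb{R}^{n\times U\times d}$ and $A\in\mathbb{R}^{d\times m}$, $XA\in\mathbb{R}^{n\times U\times m}$ is defined by $(XA)_{i,u,j}=\sum_{o=1}^d X_{i,u,o}A_{o,j}$ (index $i$: sample, $u$: convolutional patch, $j$: output channel). $\|\cdot\|_F$ is the Frobenius norm. For a subset $V$ of a normed space $(\mathbb{R}^N,\|\cdot\|)$, the covering number $\mathcal{N}(V,\epsilon,\|\cdot\|)$ is the minimum cardinality $k$ of a collection $v^1,\dots,v^k\in\mathbb{R}^N$ with $\sup_{v\in V}\min_{j}\|v-v^j\|\le\epsilon$. $\log$ is the natural logarithm. *)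

theory Defs
  imports "HOL-Analysis.Analysis"
begin

text \<open>Tensors: X in R^{n x U x d} is real^'d^'u^'n (indices i,u,o), A in R^{d x m} is real^'m^'d.
  Dimensions n,U,d,m are CARD of the finite index types (automatically positive).\<close>

definition tmul :: "real^'d^'u^'n \<Rightarrow> real^'m^'d \<Rightarrow> real^'m^'u^'n" where
  "tmul X A = (\<chi> i u j. \<Sum>k\<in>UNIV. X$i$u$k * A$k$j)"

definition frob :: "real^'m^'d \<Rightarrow> real" where
  "frob A = sqrt (\<Sum>k\<in>UNIV. \<Sum>j\<in>UNIV. (A$k$j)^2)"

definition linf3 :: "real^'m^'u^'n \<Rightarrow> real" where
  "linf3 v = Max {\<bar>v$i$u$j\<bar> | i u j. True}"

definition covering_number :: "('a::ab_group_add \<Rightarrow> real) \<Rightarrow> 'a set \<Rightarrow> real \<Rightarrow> nat" where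
  "covering_number nrm V eps =
     (LEAST k. \<exists>C. finite C \<and> card C = k \<and> (\<forall>v\<in>V. \<exists>c\<in>C. nrm (v - c) \<le> eps))"

end

theory Submission
  imports Defs
begin

definition xv :: "real^'d^'u^'n \<Rightarrow> 'n \<Rightarrow> 'u \<Rightarrow> 'm \<Rightarrow> real^'m^'d" where
  "xv X i u j = (\<chi> k l. if l = j then X$i$u$k else 0)"

lemma inner_xv: "inner W (xv X i u j) = (\<Sum>k\<in>UNIV. W$k$j * X$i$u$k)"
  unfolding xv_def inner_vec_def by (simp add: if_distrib cong: if_cong)

lemma norm_xv: "norm (xv X i u j) = norm (X$i$u)"
proof -
  have "inner (xv X i u j) (xv X i u j) = inner (X$i$u) (X$i$u)"
    unfolding inner_xv by (simp add: xv_def inner_vec_def)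
  thus ?thesis by (simp add: norm_eq_sqrt_inner)
qed

lemma frob_norm: "frob A = norm A"
  unfolding frob_def norm_eq_sqrt_inner inner_vec_def by (simp add: power2_eq_square)

lemma tmul_diff: "(tmul X A - tmul X B)$i$u$j = inner (A - B) (xv X i u j)"
  unfolding tmul_def inner_xv by (simp add: sum_subtractf algebra_simps)

lemma linf3_le: "linf3 v \<le> e \<longleftrightarrow> (\<forall>i u j. \<bar>v$i$u$j\<bar> \<le> e)"
proof -
  have eq: "{\<bar>v$i$u$j\<bar> | i u j. True} = (\<lambda>(i,u,j). \<bar>v$i$u$j\<bar>) ` UNIV" 
  proof (intro equalityI subsetI)
    fix y assume "y \<in> {\<bar>v$i$u$j\<bar> | i u j. True}"
    then obtain i u j where "y = \<bar>v$i$u$j\<bar>" by blast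
    thus "y \<in> (\<lambda>(i,u,j). \<bar>v$i$u$j\<bar>) ` UNIV" by (intro image_eqI[of _ _ "(i,u,j)"]) auto
  qed auto
  show ?thesis unfolding linf3_def eq by (subst Max_le_iff) auto
qed

definition atm :: "real^'d^'u^'n \<Rightarrow> real \<Rightarrow> ('n \<times> 'u \<times> 'm \<times> bool) option \<Rightarrow> real^'m^'d" where
  "atm X \<eta> q = (case q of None \<Rightarrow> 0 | Some (i,u,j,s) \<Rightarrow> (if s then \<eta> else - \<eta>) *\<^sub>R xv X i u j)"

definition vec :: "real^'d^'u^'n \<Rightarrow> real \<Rightarrow> ('n \<times> 'u \<times> 'm \<times> bool) option list \<Rightarrow> real^'m^'d" where
  "vec X \<eta> L = sum_list (map (atm X \<eta>) L)"

lemma step: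
  fixes X :: "real^'d^'u^'n" and W :: "real^'m^'d"
  assumes b: "b > 0" and e: "eps > 0" and Xb: "\<forall>i u. norm (X$i$u) \<le> b"
    and t: "\<bar>inner (W - vec X (eps/b^2) L) (xv X i u j)\<bar> > eps"
  shows "(norm (W - vec X (eps/b^2) (L @ [Some (i,u,j, inner (W - vec X (eps/b^2) L) (xv X i u j) > 0)])))^2
     \<le> (norm (W - vec X (eps/b^2) L))^2 - eps^2/b^2"
proof -
  define \<eta> where "\<eta> = eps/b^2"
  define r where "r = W - vec X \<eta> L"
  define x where "x = xv X i u j"
  define \<sigma> :: real where "\<sigma> = (if inner r x > 0 then 1 else -1)"
  have tt: "\<sigma> * inner r x > eps" using t e unfolding \<sigma>_def r_def x_def \<eta>_def by (auto split: if_splits)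
  have s2: "\<sigma>^2 = 1" unfolding \<sigma>_def by auto
  have nx: "(norm x)^2 \<le> b^2" using Xb b unfolding x_def norm_xv by (simp add: power_mono)
  have eq: "W - vec X \<eta> (L @ [Some (i,u,j, inner r x > 0)]) = r - (\<sigma>*\<eta>) *\<^sub>R x"
    unfolding r_def vec_def atm_def \<sigma>_def x_def by auto
  have "(norm (r - (\<sigma>*\<eta>) *\<^sub>R x))^2 = (norm r)^2 - 2*\<eta>*(\<sigma> * inner r x) + \<eta>^2*\<sigma>^2*(norm x)^2"
    unfolding power2_norm_eq_inner by (simp add: inner_diff_left inner_diff_right algebra_simps power2_eq_square inner_commute)
  also have "\<dots> \<le> (norm r)^2 - 2*\<eta>*eps + \<eta>^2*b^2"
  proof -
    have ep: "\<eta> > 0" using e b unfolding \<eta>_def by simp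
    have h1: "2*\<eta>*eps \<le> 2*\<eta>*(\<sigma> * inner r x)" using tt ep by simp
    have h2: "\<eta>^2*\<sigma>^2*(norm x)^2 \<le> \<eta>^2*b^2" using nx s2 by (simp add: mult_left_mono)
    show ?thesis using h1 h2 by linarith
  qed
  also have "\<dots> = (norm r)^2 - eps^2/b^2" using b unfolding \<eta>_def by (simp add: field_simps power2_eq_square)
  finally have fin: "(norm (r - (\<sigma>*\<eta>) *\<^sub>R x))^2 \<le> (norm r)^2 - eps^2/b^2" .
  show ?thesis using fin[unfolded eq[symmetric]] unfolding r_def x_def \<eta>_def .
qed

lemma exists_close:
  fixes X :: "real^'d^'u^'n" and W :: "real^'m^'d"
  assumes b: "b > 0" and e: "eps > 0" and Xb: "\<forall>i u. norm (X$i$u) \<le> b"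
    and K: "K = nat \<lfloor>a^2*b^2/eps^2\<rfloor>"
  shows "(norm (W - vec X (eps/b^2) L))^2 \<le> a^2 - real (length L) * (eps^2/b^2) \<Longrightarrow>
     \<exists>L'. length L' \<le> K \<and> (\<forall>i u j. \<bar>inner (W - vec X (eps/b^2) L') (xv X i u j)\<bar> \<le> eps)"
proof (induction "K - length L" arbitrary: L rule: less_induct)
  case less
  have lenK: "length L' \<le> K" if h: "(norm (W - vec X (eps/b^2) L'))^2 \<le> a^2 - real (length L') * (eps^2/b^2)" for L'
  proof -
    have d: "eps^2/b^2 > 0" using e b by simp
    have "real (length L') * (eps^2/b^2) \<le> a^2" using h by (smt (verit) zero_le_power2)
    hence "real (length L') \<le> a^2*b^2/eps^2" using d b e by (simp add: field_simps)
    hence "int (length L') \<le> \<lfloor>a^2*b^2/eps^2\<rfloor>" by (simp add: le_floor_iff)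
    thus ?thesis unfolding K by linarith
  qed
  show ?case
  proof (cases "\<forall>i u j. \<bar>inner (W - vec X (eps/b^2) L) (xv X i u j)\<bar> \<le> eps")
    case True
    then show ?thesis using lenK less.prems by blast
  next
    case False
    then have "\<exists>i u j. \<bar>inner (W - vec X (eps/b^2) L) (xv X i u j)\<bar> > eps" by (simp add: not_le)
    then obtain i u j where t: "\<bar>inner (W - vec X (eps/b^2) L) (xv X i u j)\<bar> > eps" by blast
    define L1 where "L1 = L @ [Some (i,u,j, inner (W - vec X (eps/b^2) L) (xv X i u j) > 0)]"
    have st: "(norm (W - vec X (eps/b^2) L1))^2 \<le> (norm (W - vec X (eps/b^2) L))^2 - eps^2/b^2"
      unfolding L1_def by (rule step[OF b e Xb t])
    have P1: "(norm (W - vec X (eps/b^2) L1))^2 \<le> a^2 - real (length L1) * (eps^2/b^2)"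
    proof -
      have "real (length L1) * (eps^2/b^2) = real (length L) * (eps^2/b^2) + eps^2/b^2"
        unfolding L1_def by (simp add: distrib_right add_divide_distrib)
      thus ?thesis using st less.prems by linarith
    qed
    have "length L1 \<le> K" using lenK[OF P1] .
    hence "K - length L1 < K - length L" unfolding L1_def by simp
    thus ?thesis using less.hyps P1 by blast
  qed
qed

lemma vec_pad: "vec X \<eta> (L @ replicate k None) = vec X \<eta> L"
  unfolding vec_def by (induction k) (auto simp: atm_def)

theorem mainTheorem1:
  fixes a b eps :: real
    and X :: "real^'d^'u^'n"
    and M :: "real^'m^'d"
  assumes "a > 0" and "b > 0" and "eps > 0"
    and "\<forall>i u. norm (X$i$u) \<le> b"
  shows "ln (real (covering_number linf3 {tmul X A | A. frob (A - M) \<le> a} eps))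
     \<le> 36 * a^2 * b^2 / eps^2
        * log 2 ((8 * a * b / eps + 7) * real CARD('m) * real CARD('n) * real CARD('u))"
proof -
  note a = assms(1) and b = assms(2) and e = assms(3) and Xb = assms(4)
  define K where "K = nat \<lfloor>a^2*b^2/eps^2\<rfloor>"
  define \<eta> where "\<eta> = eps/b^2"
  define V where "V = {tmul X A | A. frob (A - M) \<le> a}"
  define B :: "('n \<times> 'u \<times> 'm \<times> bool) option set" where "B = insert None (Some ` UNIV)"
  define Ls where "Ls = {L. set L \<subseteq> B \<and> length L = K}"
  define C where "C = (\<lambda>L. tmul X (M + vec X \<eta> L)) ` Ls"
  define N where "N = CARD('m) * CARD('n) * CARD('u)"
  have cardB: "card B = 2*N + 1"
  proof -
    have "card (Some ` (UNIV :: ('n \<times> 'u \<times> 'm \<times> bool) set)) = CARD('n \<times> 'u \<times> 'm \<times> bool)"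
      by (simp add: card_image)
    thus ?thesis unfolding B_def N_def by (simp add: card_insert_if)
  qed
  have finB: "finite B" unfolding B_def by simp
  have finC: "finite C" unfolding C_def Ls_def using finite_lists_length_eq[OF finB] by simp
  have cardC: "card C \<le> (2*N+1)^K"
  proof -
    have "card C \<le> card Ls" unfolding C_def by (rule card_image_le) (simp add: Ls_def finite_lists_length_eq[OF finB])
    also have "card Ls = (2*N+1)^K" unfolding Ls_def card_lists_length_eq[OF finB] cardB ..
    finally show ?thesis .
  qed
  have cover: "\<forall>v\<in>V. \<exists>c\<in>C. linf3 (v - c) \<le> eps"
  proof
    fix v assume "v \<in> V"
    then obtain A where vA: "v = tmul X A" and fA: "frob (A - M) \<le> a" unfolding V_def by blast
    define W where "W = A - M"
    have "(norm (W - vec X (eps/b^2) [])) ^2 \<le> a^2 - real (length ([]::('n \<times> 'u \<times> 'm \<times> bool) option list)) * (eps^2/b^2)"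
      using fA a unfolding W_def frob_norm vec_def by (simp add: power_mono)
    from exists_close[OF b e Xb K_def this] obtain L' where
      L'K: "length L' \<le> K" and cl: "\<forall>i u j. \<bar>inner (W - vec X (eps/b^2) L') (xv X i u j)\<bar> \<le> eps" by blast
    define L'' where "L'' = L' @ replicate (K - length L') None"
    have "L'' \<in> Ls" unfolding Ls_def L''_def B_def using L'K by (auto simp: notin_range_Some)
    hence cC: "tmul X (M + vec X \<eta> L'') \<in> C" unfolding C_def by blast
    have vv: "vec X \<eta> L'' = vec X \<eta> L'" unfolding L''_def by (rule vec_pad)
    have "linf3 (v - tmul X (M + vec X \<eta> L'')) \<le> eps"
      unfolding linf3_le vA tmul_diff vv using cl unfolding W_def \<eta>_def by (simp add: algebra_simps)
    thus "\<exists>c\<in>C. linf3 (v - c) \<le> eps" using cC by blast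
  qed
  define P where "P = (\<lambda>k. \<exists>C. finite C \<and> card C = k \<and> (\<forall>v\<in>V. \<exists>c\<in>C. linf3 (v - c) \<le> eps))"
  have cn: "covering_number linf3 V eps = (LEAST k. P k)" unfolding covering_number_def P_def ..
  have PC: "P (card C)" unfolding P_def using finC cover by blast
  have le: "covering_number linf3 V eps \<le> card C" unfolding cn using PC by (rule Least_le)
  have ge: "covering_number linf3 V eps \<ge> 1"
  proof -
    have "P (LEAST k. P k)" using PC by (rule LeastI)
    then obtain C' where C': "finite C'" "card C' = (LEAST k. P k)" "\<forall>v\<in>V. \<exists>c\<in>C'. linf3 (v - c) \<le> eps"
      unfolding P_def by blast
    have "tmul X M \<in> V" unfolding V_def frob_norm using a by force
    hence "C' \<noteq> {}" using C'(3) by blast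
    hence "card C' \<noteq> 0" using C'(1) by simp
    thus ?thesis unfolding cn C'(2)[symmetric] by simp
  qed
  have N1: "N \<ge> 1" unfolding N_def by simp
  have "ln (real (covering_number linf3 V eps)) \<le> ln (real ((2*N+1)^K))"
  proof -
    have h: "real (covering_number linf3 V eps) \<le> real ((2*N+1)^K)"
      using order.trans[OF le cardC] of_nat_le_iff by blast
    have "real (covering_number linf3 V eps) > 0" using ge by simp
    with h show ?thesis by (rule ln_mono)
  qed
  also have "\<dots> = real K * ln (2*N+1)" by (simp add: ln_realpow)
  also have "\<dots> \<le> (a^2*b^2/eps^2) * ln (2*N+1)"
  proof -
    have x0: "a^2*b^2/eps^2 \<ge> 0" by simp
    have "real K = real_of_int \<lfloor>a^2*b^2/eps^2\<rfloor>" unfolding K_def using x0 by simp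
    hence "real K \<le> a^2*b^2/eps^2" using of_int_floor_le by simp
    moreover have "ln (2*real N+1) \<ge> 0" by simp
    ultimately show ?thesis by (intro mult_right_mono) auto
  qed
  also have "\<dots> \<le> 36 * a^2 * b^2 / eps^2 * log 2 ((8 * a * b / eps + 7) * real CARD('m) * real CARD('n) * real CARD('u))"
  proof -
    define y where "y = (8 * a * b / eps + 7) * real CARD('m) * real CARD('n) * real CARD('u)"
    have r0: "8*a*b/eps \<ge> 0" using a b e by simp
    have yN: "y = (8 * a * b / eps + 7) * real N" unfolding y_def N_def by simp
    have "real (2*N+1) \<le> y"
    proof -
      have n1: "real N \<ge> 1" using N1 by simp
      have "real (2*N+1) \<le> 7 * real N" using n1 by simp
      also have "\<dots> \<le> (8 * a * b / eps + 7) * real N" using r0 n1 by (intro mult_right_mono) auto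
      finally show ?thesis using yN by simp
    qed
    hence l1: "ln (real (2*N+1)) \<le> ln y" by (intro ln_mono) auto
    have y1: "y \<ge> 1" using \<open>real (2*N+1) \<le> y\<close> by simp
    have ly: "0 \<le> ln y" using y1 by simp
    have "ln y * ln 2 \<le> ln y" using mult_left_mono[OF less_imp_le[OF ln_2_less_1] ly] by simp
    hence "ln y \<le> log 2 y" unfolding log_def by (simp add: le_divide_eq)
    hence l2: "ln (real (2*N+1)) \<le> 36 * log 2 y" using l1 ln_ge_zero[OF y1] by linarith
    have c0: "a^2*b^2/eps^2 \<ge> 0" by simp
    have "(a^2*b^2/eps^2) * ln (real (2*N+1)) \<le> (a^2*b^2/eps^2) * (36 * log 2 y)"
      using mult_left_mono[OF l2 c0] .
    thus ?thesis unfolding y_def by (simp add: field_simps)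
  qed
  finally show ?thesis unfolding V_def .
qed

end
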